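(* Let $F=(T_1,\dots,T_b)$ be a tree ensemble with input dimension $n$ and output dimension $m$ in which every leaf region is a box, and write $T_r=\{(X_{r,1},\bar y_{r,1}),\dots,(X_{r,k_r},\bar y_{r,k_r})\}$. Let $\hat X$ be a box none of whose components is $\bot$. For every choice of indices $(j_1,\dots,j_b)$ with $1\le j_r\le k_r$, put $$\hat Y_{j_1,\dots,j_b}=\hat X\sqcap\alpha_n(X_{1,j_1})\sqcap\dots\sqcap\alpha_n(X_{b,j_b}).$$ Then (i) whenever no component of $\hat Y_{j_1,\dots,j_b}$ is $\bot$, the set $\gamma_m\big(\hat f(\hat Y_{j_1,\dots,j_b};F)\big)$ has exactly one element; and (ii) the sets $\gamma_n(\hat Y_{j_1,\dots,j_b})$, over those index choices for which no component of $\hat Y_{j_1,\dots,j_b}$ is $\bot$, are pairwise disjoint and their union is $\gamma_n(\hat X)$.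
   Context: Setting (interval abstract interpretation). $\mathcal{D}\subset\mathbb{R}$ is a fixed finite nonempty set, ordered by $\le$. Input intervals: $\bot$ and $[l,u]$ with $l,u\in\mathcal D$, $l\le u$; $\gamma([l,u])=\{v\in\mathcal D:l\le v\le u\}$, $\gamma(\bot)=\emptyset$; $\alpha(V)=[\min V,\max V]$ for nonempty $V\subseteq\mathcal D$, $\alpha(\emptyset)=\bot$; meet $[l,u]\sqcap[l',u']=\bot$ if $\max(l,l')>\min(u,u')$, else $[\max(l,l'),\min(u,u')]$; $\bot\sqcap\hat v=\bot$. Output (real) intervals: $\bot$ and $[l,u]$, $l\le u$ real; $\gamma([l,u])=\{v\in\mathbb R:l\le v\le u\}$; $\alpha(V)=[\min V,\max V]$ for finite nonempty $V\subset\mathbb R$, $\alpha(\emptyset)=\bot$; $[a,b]+[c,d]=[a+c,b+d]$, $\bot+\hat v=\bot$. For sets of tuples $\alpha_n(X)=(\alpha(\pi_1X),\dots,\alpha(\pi_nX))$; a box is a tuple $(\hat x_1,\dots,\hat x_n)$ of input intervals, with $\gamma_n(\hat x_1,\dots,\hat x_n)=\prod_i\gamma(\hat x_i)$; meet of boxes componentwise; "$\hat X\sqcap\hat Y\ne\bot$" means no component is $\bot$. $\alpha_m,\gamma_m$ on $\mathbb R^m$ are componentwise likewise. Decision tree $T=\{(X_1,\bar y_1),\dots,(X_k,\bar y_k)\}$: $X_1,\dots,X_k$ partition $\mathcal D^n$, $\bar y_j\in\mathbb R^m$; $t(\bar x;T)=\bar y_j$ iff $\bar x\in X_j$; tree transformer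 $\hat t(\hat X;T)=\alpha_m(\{\bar y_j:\hat X\sqcap\alpha_n(X_j)\ne\bot\})$. A leaf region $X_j$ is a box if $X_j=\gamma_n(\alpha_n(X_j))$ (i.e. it is a product of sets of the form $\{v\in\mathcal D:l\le v\le u\}$); this holds for trees with univariate threshold rules. Ensemble $F=(T_1,\dots,T_b)$: $f(\bar x;F)=\sum_i t(\bar x;T_i)$, ensemble transformer $\hat f(\hat X;F)=\sum_i\hat t(\hat X;T_i)$. *)

theory Defs
  imports Complex_Main
begin

text \<open>Intervals (input and output) are represented as (real \<times> real) option:
  None is bottom, Some (l,u) is [l,u].\<close>

type_synonym ival = "(real \<times> real) option"
type_synonym box = "ival list"
type_synonym tree = "(real list set \<times> real list) list"
type_synonym ensemble = "tree list"

definition gamma_in :: "real set \<Rightarrow> ival \<Rightarrow> real set" where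
  "gamma_in D iv = (case iv of None \<Rightarrow> {} | Some (l,u) \<Rightarrow> {v\<in>D. l \<le> v \<and> v \<le> u})"

definition gamma_out :: "ival \<Rightarrow> real set" where
  "gamma_out iv = (case iv of None \<Rightarrow> {} | Some (l,u) \<Rightarrow> {v. l \<le> v \<and> v \<le> u})"

definition alpha :: "real set \<Rightarrow> ival" where
  "alpha V = (if V = {} then None else Some (Min V, Max V))"

fun meet :: "ival \<Rightarrow> ival \<Rightarrow> ival" where
  "meet None _ = None"
| "meet _ None = None"
| "meet (Some (l,u)) (Some (l',u')) =
     (if max l l' > min u u' then None else Some (max l l', min u u'))"

fun iadd :: "ival \<Rightarrow> ival \<Rightarrow> ival" where
  "iadd None _ = None"
| "iadd _ None = None"
| "iadd (Some (a,b)) (Some (c,d)) = Some (a + c, b + d)"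

definition is_input_ival :: "real set \<Rightarrow> ival \<Rightarrow> bool" where
  "is_input_ival D iv = (case iv of None \<Rightarrow> True
      | Some (l,u) \<Rightarrow> l \<in> D \<and> u \<in> D \<and> l \<le> u)"

definition points :: "real set \<Rightarrow> nat \<Rightarrow> real list set" where
  "points D n = {x. length x = n \<and> set x \<subseteq> D}"

definition alpha_n :: "nat \<Rightarrow> real list set \<Rightarrow> box" where
  "alpha_n n X = map (\<lambda>i. alpha ((\<lambda>x. x ! i) ` X)) [0..<n]"

definition gamma_n :: "real set \<Rightarrow> box \<Rightarrow> real list set" where
  "gamma_n D B = {x. length x = length B \<and> (\<forall>i<length B. x ! i \<in> gamma_in D (B ! i))}"

definition gamma_m :: "box \<Rightarrow> real list set" where
  "gamma_m B = {y. length y = length B \<and> (\<forall>i<length B. y ! i \<in> gamma_out (B ! i))}"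

definition meet_box :: "box \<Rightarrow> box \<Rightarrow> box" where
  "meet_box A B = map2 meet A B"

definition nonbot :: "box \<Rightarrow> bool" where
  "nonbot B = (\<forall>c\<in>set B. c \<noteq> None)"

definition is_input_box :: "real set \<Rightarrow> nat \<Rightarrow> box \<Rightarrow> bool" where
  "is_input_box D n B = (length B = n \<and> (\<forall>c\<in>set B. is_input_ival D c))"

definition is_tree :: "real set \<Rightarrow> nat \<Rightarrow> nat \<Rightarrow> tree \<Rightarrow> bool" where
  "is_tree D n m T =
     ((\<forall>j<length T. fst (T ! j) \<noteq> {} \<and> length (snd (T ! j)) = m) \<and>
      (\<forall>i<length T. \<forall>j<length T. i \<noteq> j \<longrightarrow> fst (T ! i) \<inter> fst (T ! j) = {}) \<and>
      (\<Union>j<length T. fst (T ! j)) = points D n)"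

definition leaves_are_boxes :: "real set \<Rightarrow> nat \<Rightarrow> tree \<Rightarrow> bool" where
  "leaves_are_boxes D n T = (\<forall>j<length T. fst (T ! j) = gamma_n D (alpha_n n (fst (T ! j))))"

definition alpha_m :: "nat \<Rightarrow> real list set \<Rightarrow> box" where
  "alpha_m m Y = map (\<lambda>i. alpha ((\<lambda>y. y ! i) ` Y)) [0..<m]"

definition tree_hat :: "nat \<Rightarrow> nat \<Rightarrow> box \<Rightarrow> tree \<Rightarrow> box" where
  "tree_hat n m B T =
     alpha_m m {snd (T ! j) | j. j < length T \<and> nonbot (meet_box B (alpha_n n (fst (T ! j))))}"

definition ens_hat :: "nat \<Rightarrow> nat \<Rightarrow> box \<Rightarrow> ensemble \<Rightarrow> box" where
  "ens_hat n m B F = foldr (\<lambda>T acc. map2 iadd (tree_hat n m B T) acc) F (replicate m (Some (0, 0)))"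

definition index_choices :: "ensemble \<Rightarrow> nat list set" where
  "index_choices F = {js. length js = length F \<and> (\<forall>r<length F. js ! r < length (F ! r))}"

definition Yhat :: "nat \<Rightarrow> ensemble \<Rightarrow> box \<Rightarrow> nat list \<Rightarrow> box" where
  "Yhat n F Xh js = foldl (\<lambda>acc r. meet_box acc (alpha_n n (fst ((F ! r) ! (js ! r))))) Xh [0..<length F]"

end

theory Submission
  imports Defs
begin

lemma gamma_in_meet: "gamma_in D (meet a b) = gamma_in D a \<inter> gamma_in D b"
  by (induction a b rule: meet.induct) (auto simp: gamma_in_def)

lemma input_meet: "is_input_ival D a \<Longrightarrow> is_input_ival D b \<Longrightarrow> is_input_ival D (meet a b)"
  by (induction a b rule: meet.induct) (auto simp: is_input_ival_def max_def min_def)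

lemma input_nonempty: "is_input_ival D c \<Longrightarrow> c \<noteq> None \<Longrightarrow> fst (the c) \<in> gamma_in D c"
  by (cases c) (auto simp: is_input_ival_def gamma_in_def split: prod.splits)

lemma gamma_n_meet_box:
  "length A = length B \<Longrightarrow> gamma_n D (meet_box A B) = gamma_n D A \<inter> gamma_n D B"
  by (auto simp: gamma_n_def meet_box_def gamma_in_meet)

lemma input_meet_box:
  assumes "is_input_box D n A" "is_input_box D n B"
  shows "is_input_box D n (meet_box A B)"
  using assms unfolding is_input_box_def meet_box_def
  by (auto simp: set_zip intro!: input_meet)

lemma nonbot_gamma:
  assumes "is_input_box D n B" "nonbot B" shows "gamma_n D B \<noteq> {}"
proof -
  have "map (\<lambda>c. fst (the c)) B \<in> gamma_n D B"
    using assms unfolding gamma_n_def is_input_box_def nonbot_def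
    by (auto intro!: input_nonempty)
  then show ?thesis by blast
qed

lemma gamma_nonbot:
  assumes "x \<in> gamma_n D B" shows "nonbot B"
  unfolding nonbot_def
proof (intro ballI)
  fix c assume "c \<in> set B"
  then obtain i where i: "i < length B" "c = B ! i" by (auto simp: in_set_conv_nth)
  then have "x ! i \<in> gamma_in D c" using assms unfolding gamma_n_def by auto
  then show "c \<noteq> None" by (cases c) (auto simp: gamma_in_def)
qed

lemma nonbot_iff:
  assumes "is_input_box D n B" shows "nonbot B \<longleftrightarrow> gamma_n D B \<noteq> {}"
  using assms nonbot_gamma gamma_nonbot by blast

lemma finite_points: "finite D \<Longrightarrow> finite (points D n)"
proof -
  assume "finite D"
  then have "finite {xs. set xs \<subseteq> D \<and> length xs = n}" by (rule finite_lists_length_eq)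
  then show ?thesis unfolding points_def by (simp add: conj_commute)
qed

lemma input_alpha_n:
  assumes "finite D" "X \<noteq> {}" "X \<subseteq> points D n"
  shows "is_input_box D n (alpha_n n X)"
proof -
  have fin: "finite X" using assms finite_points finite_subset by blast
  have "is_input_ival D (alpha ((\<lambda>x. x ! i) ` X))" if "i < n" for i
  proof -
    let ?V = "(\<lambda>x. x ! i) ` X"
    have V: "finite ?V" "?V \<noteq> {}" using fin assms by auto
    have sub: "?V \<subseteq> D"
    proof
      fix v assume "v \<in> ?V"
      then obtain x where "x \<in> X" "v = x ! i" by auto
      then show "v \<in> D" using assms(3) that unfolding points_def by (auto intro: nth_mem)
    qed
    have "Min ?V \<in> D" "Max ?V \<in> D" using sub Min_in[OF V] Max_in[OF V] by blast+
    moreover have "Min ?V \<le> Max ?V" using Min_le[OF V(1) Max_in[OF V]] .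
    ultimately show ?thesis unfolding alpha_def is_input_ival_def using V(2) by simp
  qed
  then show ?thesis unfolding is_input_box_def alpha_n_def by auto
qed

lemma foldl_meet:
  "is_input_box D n B \<Longrightarrow> (\<forall>r\<in>set rs. is_input_box D n (g r)) \<Longrightarrow>
   is_input_box D n (foldl (\<lambda>acc r. meet_box acc (g r)) B rs) \<and>
   gamma_n D (foldl (\<lambda>acc r. meet_box acc (g r)) B rs) = gamma_n D B \<inter> (\<Inter>r\<in>set rs. gamma_n D (g r))"
proof (induction rs arbitrary: B)
  case Nil then show ?case by simp
next
  case (Cons a rs)
  have "is_input_box D n (meet_box B (g a))" using Cons.prems input_meet_box by auto
  moreover have "gamma_n D (meet_box B (g a)) = gamma_n D B \<inter> gamma_n D (g a)"
    using Cons.prems by (intro gamma_n_meet_box) (auto simp: is_input_box_def)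
  ultimately show ?case using Cons.IH[of "meet_box B (g a)"] Cons.prems by auto
qed

lemma leaf_facts:
  assumes "finite D" "is_tree D n m T" "leaves_are_boxes D n T" "j < length T"
  shows "fst (T!j) \<noteq> {}" "fst (T!j) \<subseteq> points D n"
    "gamma_n D (alpha_n n (fst (T!j))) = fst (T!j)"
    "is_input_box D n (alpha_n n (fst (T!j)))" "length (snd (T!j)) = m"
proof -
  show a: "fst (T!j) \<noteq> {}" "length (snd (T!j)) = m" using assms unfolding is_tree_def by auto
  show b: "fst (T!j) \<subseteq> points D n" using assms unfolding is_tree_def by blast
  show "gamma_n D (alpha_n n (fst (T!j))) = fst (T!j)" using assms unfolding leaves_are_boxes_def by auto
  show "is_input_box D n (alpha_n n (fst (T!j)))" using input_alpha_n[OF assms(1) a(1) b] .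
qed

lemma Yhat_facts:
  assumes "finite D" "\<forall>T\<in>set F. is_tree D n m T \<and> leaves_are_boxes D n T"
    "is_input_box D n Xh" "js \<in> index_choices F"
  shows "is_input_box D n (Yhat n F Xh js) \<and>
    gamma_n D (Yhat n F Xh js) = gamma_n D Xh \<inter> (\<Inter>r\<in>{0..<length F}. fst ((F!r)!(js!r)))"
proof -
  let ?g = "\<lambda>r. alpha_n n (fst ((F!r)!(js!r)))"
  have lf: "is_input_box D n (?g r) \<and> gamma_n D (?g r) = fst ((F!r)!(js!r))" if "r < length F" for r
  proof -
    have "F!r \<in> set F" using that by simp
    moreover have "js!r < length (F!r)" using assms(4) that unfolding index_choices_def by auto
    ultimately have "is_tree D n m (F!r)" "leaves_are_boxes D n (F!r)" "js!r < length (F!r)" using assms(2) by auto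
    then show ?thesis using leaf_facts[OF assms(1)] by blast
  qed
  have "is_input_box D n (foldl (\<lambda>acc r. meet_box acc (?g r)) Xh [0..<length F]) \<and>
   gamma_n D (foldl (\<lambda>acc r. meet_box acc (?g r)) Xh [0..<length F]) = gamma_n D Xh \<inter> (\<Inter>r\<in>set [0..<length F]. gamma_n D (?g r))"
    by (rule foldl_meet) (use assms(3) lf in auto)
  moreover have "(\<Inter>r\<in>set [0..<length F]. gamma_n D (?g r)) = (\<Inter>r\<in>{0..<length F}. fst ((F!r)!(js!r)))"
    using lf by auto
  ultimately show ?thesis unfolding Yhat_def by simp
qed

lemma tree_hat_single:
  assumes "finite D" "is_tree D n m T" "leaves_are_boxes D n T" "is_input_box D n B"
    "gamma_n D B \<noteq> {}" "j0 < length T" "gamma_n D B \<subseteq> fst (T!j0)"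
  shows "tree_hat n m B T = map (\<lambda>i. Some (snd (T!j0) ! i, snd (T!j0) ! i)) [0..<m]"
proof -
  have key: "nonbot (meet_box B (alpha_n n (fst (T!j)))) \<longleftrightarrow> j = j0" if j: "j < length T" for j
  proof -
    have ib: "is_input_box D n (alpha_n n (fst (T!j)))" using leaf_facts[OF assms(1-3) j] by blast
    have "nonbot (meet_box B (alpha_n n (fst (T!j)))) \<longleftrightarrow> gamma_n D (meet_box B (alpha_n n (fst (T!j)))) \<noteq> {}"
      by (rule nonbot_iff[OF input_meet_box[OF assms(4) ib]])
    also have "gamma_n D (meet_box B (alpha_n n (fst (T!j)))) = gamma_n D B \<inter> fst (T!j)"
      using gamma_n_meet_box[of B "alpha_n n (fst (T!j))" D] assms(4) ib leaf_facts[OF assms(1-3) j]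
      by (simp add: is_input_box_def)
    also have "(gamma_n D B \<inter> fst (T!j) \<noteq> {}) \<longleftrightarrow> j = j0"
    proof
      assume "gamma_n D B \<inter> fst (T!j) \<noteq> {}"
      then have "fst (T!j0) \<inter> fst (T!j) \<noteq> {}" using assms(7) by blast
      then show "j = j0" using assms(2,6) j unfolding is_tree_def by blast
    next
      assume "j = j0" then show "gamma_n D B \<inter> fst (T!j) \<noteq> {}" using assms(5,7) by blast
    qed
    finally show ?thesis .
  qed
  have S: "{snd (T ! j) | j. j < length T \<and> nonbot (meet_box B (alpha_n n (fst (T ! j))))} = {snd (T!j0)}"
    using key assms(6) by auto
  show ?thesis unfolding tree_hat_def S alpha_m_def by (simp add: alpha_def)
qed

lemma ens_fold:
  assumes "\<forall>T\<in>set F. \<exists>y. length y = m \<and> h T = map (\<lambda>i. Some (y!i, y!i)) [0..<m]"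
  shows "\<exists>s. length s = m \<and> foldr (\<lambda>T acc. map2 iadd (h T) acc) F (replicate m (Some (0,0)))
     = map (\<lambda>i. Some (s!i, s!i)) [0..<m]"
  using assms
proof (induction F)
  case Nil
  show ?case by (rule exI[of _ "replicate m 0"]) (auto intro: nth_equalityI)
next
  case (Cons T F)
  then obtain s where s: "length s = m" "foldr (\<lambda>T acc. map2 iadd (h T) acc) F (replicate m (Some (0,0)))
     = map (\<lambda>i. Some (s!i, s!i)) [0..<m]" by auto
  obtain y where y: "length y = m" "h T = map (\<lambda>i. Some (y!i, y!i)) [0..<m]" using Cons.prems by auto
  show ?case
    by (rule exI[of _ "map (\<lambda>i. y!i + s!i) [0..<m]"]) (auto simp: s y intro: nth_equalityI)
qed

lemma gamma_m_single:
  assumes "length s = m" shows "gamma_m (map (\<lambda>i. Some (s!i, s!i)) [0..<m]) = {s}"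
proof -
  have "x \<in> gamma_m (map (\<lambda>i. Some (s!i, s!i)) [0..<m]) \<longleftrightarrow> x = s" for x
  proof
    assume "x \<in> gamma_m (map (\<lambda>i. Some (s!i, s!i)) [0..<m])"
    then have "length x = m" "\<forall>i<m. s!i \<le> x!i \<and> x!i \<le> s!i"
      unfolding gamma_m_def gamma_out_def by auto
    then show "x = s" using assms by (intro nth_equalityI) (auto intro: order_antisym)
  next
    assume "x = s" then show "x \<in> gamma_m (map (\<lambda>i. Some (s!i, s!i)) [0..<m])"
      using assms unfolding gamma_m_def gamma_out_def by auto
  qed
  then show ?thesis by blast
qed


theorem mainTheorem6:
  fixes D :: "real set" and n m :: nat and F :: ensemble and Xh :: box
  assumes "finite D" and "D \<noteq> {}"
    and "\<forall>T\<in>set F. is_tree D n m T \<and> leaves_are_boxes D n T"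
    and "is_input_box D n Xh" and "nonbot Xh"
  shows "(\<forall>js\<in>index_choices F. nonbot (Yhat n F Xh js) \<longrightarrow>
            (\<exists>y. gamma_m (ens_hat n m (Yhat n F Xh js) F) = {y}))
       \<and> (\<forall>js\<in>index_choices F. \<forall>js'\<in>index_choices F.
            js \<noteq> js' \<and> nonbot (Yhat n F Xh js) \<and> nonbot (Yhat n F Xh js') \<longrightarrow>
            gamma_n D (Yhat n F Xh js) \<inter> gamma_n D (Yhat n F Xh js') = {})
       \<and> (\<Union>js\<in>{js\<in>index_choices F. nonbot (Yhat n F Xh js)}. gamma_n D (Yhat n F Xh js))
            = gamma_n D Xh"
proof (intro conjI ballI impI)
  note YF = Yhat_facts[OF assms(1) assms(3) assms(4)]
  fix js assume js: "js \<in> index_choices F" and nb: "nonbot (Yhat n F Xh js)"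
  let ?B = "Yhat n F Xh js"
  have ib: "is_input_box D n ?B" using YF[OF js] by blast
  have ne: "gamma_n D ?B \<noteq> {}" using nonbot_gamma[OF ib nb] .
  have "\<forall>T\<in>set F. \<exists>y. length y = m \<and> tree_hat n m ?B T = map (\<lambda>i. Some (y!i, y!i)) [0..<m]"
  proof
    fix T assume "T \<in> set F"
    then obtain r where r: "r < length F" "T = F!r" by (auto simp: in_set_conv_nth)
    have T: "is_tree D n m T" "leaves_are_boxes D n T" using assms(3) \<open>T \<in> set F\<close> by auto
    have j0: "js!r < length T" using js r unfolding index_choices_def by auto
    have sub: "gamma_n D ?B \<subseteq> fst (T!(js!r))" using YF[OF js] r by auto
    show "\<exists>y. length y = m \<and> tree_hat n m ?B T = map (\<lambda>i. Some (y!i, y!i)) [0..<m]"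
      using tree_hat_single[OF assms(1) T ib ne j0 sub] leaf_facts[OF assms(1) T j0] by blast
  qed
  from ens_fold[OF this] obtain s where s: "length s = m"
    "ens_hat n m ?B F = map (\<lambda>i. Some (s!i, s!i)) [0..<m]" unfolding ens_hat_def by blast
  show "\<exists>y. gamma_m (ens_hat n m ?B F) = {y}" using gamma_m_single[OF s(1)] s(2) by auto
next
  note YF = Yhat_facts[OF assms(1) assms(3) assms(4)]
  fix js js' assume js: "js \<in> index_choices F" and js': "js' \<in> index_choices F"
    and h: "js \<noteq> js' \<and> nonbot (Yhat n F Xh js) \<and> nonbot (Yhat n F Xh js')"
  have "\<exists>r<length F. js!r \<noteq> js'!r"
  proof (rule ccontr)
    assume "\<not> ?thesis"
    then have "js = js'" using js js' unfolding index_choices_def by (auto intro: nth_equalityI)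
    then show False using h by simp
  qed
  then obtain r where r: "r < length F" "js!r \<noteq> js'!r" by blast
  have T: "is_tree D n m (F!r)" using assms(3) r by auto
  have "fst ((F!r)!(js!r)) \<inter> fst ((F!r)!(js'!r)) = {}"
    using T r js js' unfolding is_tree_def index_choices_def by auto
  moreover have "gamma_n D (Yhat n F Xh js) \<subseteq> fst ((F!r)!(js!r))" using YF[OF js] r by auto
  moreover have "gamma_n D (Yhat n F Xh js') \<subseteq> fst ((F!r)!(js'!r))" using YF[OF js'] r by auto
  ultimately show "gamma_n D (Yhat n F Xh js) \<inter> gamma_n D (Yhat n F Xh js') = {}" by blast
next
  note YF = Yhat_facts[OF assms(1) assms(3) assms(4)]
  show "(\<Union>js\<in>{js\<in>index_choices F. nonbot (Yhat n F Xh js)}. gamma_n D (Yhat n F Xh js)) = gamma_n D Xh"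
  proof
    show "(\<Union>js\<in>{js\<in>index_choices F. nonbot (Yhat n F Xh js)}. gamma_n D (Yhat n F Xh js)) \<subseteq> gamma_n D Xh"
      using YF by auto
  next
    show "gamma_n D Xh \<subseteq> (\<Union>js\<in>{js\<in>index_choices F. nonbot (Yhat n F Xh js)}. gamma_n D (Yhat n F Xh js))"
    proof
      fix x assume x: "x \<in> gamma_n D Xh"
      have xD: "x ! i \<in> D" if "i < length x" for i
      proof -
        have "x ! i \<in> gamma_in D (Xh ! i)" "i < length Xh" using x that unfolding gamma_n_def by auto
        then show ?thesis by (cases "Xh ! i") (auto simp: gamma_in_def)
      qed
      have xp: "x \<in> points D n" using x assms(4) xD
        unfolding gamma_n_def points_def is_input_box_def
        by (auto simp: in_set_conv_nth)
      have ex: "\<exists>j. j < length (F!r) \<and> x \<in> fst ((F!r)!j)" if "r < length F" for r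
      proof -
        have "is_tree D n m (F!r)" using assms(3) that by auto
        then have "x \<in> (\<Union>j<length (F!r). fst ((F!r)!j))" using xp unfolding is_tree_def by auto
        then show ?thesis by auto
      qed
      define js where "js = map (\<lambda>r. SOME j. j < length (F!r) \<and> x \<in> fst ((F!r)!j)) [0..<length F]"
      have jsr: "js!r < length (F!r) \<and> x \<in> fst ((F!r)!(js!r))" if "r < length F" for r
        unfolding js_def using someI_ex[OF ex[OF that]] that by simp
      have jsi: "js \<in> index_choices F" unfolding index_choices_def using jsr by (auto simp: js_def)
      have "x \<in> gamma_n D (Yhat n F Xh js)" using YF[OF jsi] x jsr by auto
      moreover then have "nonbot (Yhat n F Xh js)" by (rule gamma_nonbot)
      ultimately show "x \<in> (\<Union>js\<in>{js\<in>index_choices F. nonbot (Yhat n F Xh js)}. gamma_n D (Yhat n F Xh js))"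
        using jsi by blast
    qed
  qed
qed

end
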